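(* Let $W$ be a real $N\times N$ matrix with singular value decomposition $W=U\Sigma V^\top$ and rank $n$, where $1\le n<N$, and let $V_n$ be the $N\times n$ matrix of the first $n$ right singular vectors of $W$. Let $g:\mathbb{R}^N\times\mathbb{R}^N\to\mathbb{R}^N$ be continuously differentiable and suppose that its Jacobian with respect to the first argument satisfies $J_x(x,y)=\big(\partial g_i/\partial x_j\big)_{i,j}=aI$ for all $(x,y)$, for some real constant $a$. Let $M=V_n^\top$ and consider the complete dynamics $\dot x=g(x,Wx)$ and reduced dynamics $\dot X=Mg(M^+X,WM^+X)$. Then the alignment error \[\mathcal{E}(x)=\frac{1}{\sqrt n}\big\|Mg(x,Wx)-Mg(M^+Mx,WM^+Mx)\big\|\] vanishes for all $x\in\mathbb{R}^N$.
   Context: $\|\cdot\|$ is the Euclidean norm and $M^+$ the Moore–Penrose pseudoinverse of $M$. *)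

theory Defs
  imports "HOL-Analysis.Analysis"
begin

definition is_pinv :: "real^'m^'n \<Rightarrow> real^'n^'m \<Rightarrow> bool" where
  "is_pinv A X \<longleftrightarrow> A ** X ** A = A \<and> X ** A ** X = X \<and>
     transpose (A ** X) = A ** X \<and> transpose (X ** A) = X ** A"

definition pinv :: "real^'m^'n \<Rightarrow> real^'n^'m" where
  "pinv A = (THE X. is_pinv A X)"

definition diag_mat :: "('n \<Rightarrow> real) \<Rightarrow> real^'n^'n" where
  "diag_mat s = (\<chi> i j. if i = j then s i else 0)"

definition is_svd :: "((real,'N::{finite,linorder}) vec,'N) vec \<Rightarrow> ((real,'N) vec,'N) vec \<Rightarrow> ('N \<Rightarrow> real) \<Rightarrow> ((real,'N) vec,'N) vec \<Rightarrow> bool" where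
  "is_svd W U s V \<longleftrightarrow> orthogonal_matrix U \<and> orthogonal_matrix V \<and>
     (\<forall>i. 0 \<le> s i) \<and> (\<forall>i j. i \<le> j \<longrightarrow> s j \<le> s i) \<and>
     W = U ** diag_mat s ** transpose V"

text \<open>Vn (an N x n matrix, n = CARD('n)) consists of the first n columns of V,
  i.e. column k of Vn is column idx k of V, where idx is the order-preserving
  enumeration of an initial segment of the index type 'N.\<close>
definition first_cols :: "((real,'N::{finite,linorder}) vec,'N) vec \<Rightarrow> ((real,'n::{finite,linorder}) vec,'N) vec \<Rightarrow> bool" where
  "first_cols V Vn \<longleftrightarrow> (\<exists>idx :: 'n \<Rightarrow> 'N.
     strict_mono idx \<and> (\<forall>i k. i \<le> idx k \<longrightarrow> i \<in> range idx) \<and>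
     (\<forall>i k. Vn $ i $ k = V $ i $ idx k))"

end

theory Submission
  imports Defs
begin

lemma pinv_unique:
  fixes A :: "real^'m^'n"
  assumes X: "is_pinv A X" and Y: "is_pinv A Y"
  shows "X = Y"
proof -
  have a1: "A ** X ** A = A" and a2: "X ** A ** X = X" and a3: "transpose (A ** X) = A ** X"
    and a4: "transpose (X ** A) = X ** A" using X unfolding is_pinv_def by auto
  have b1: "A ** Y ** A = A" and b2: "Y ** A ** Y = Y" and b3: "transpose (A ** Y) = A ** Y"
    and b4: "transpose (Y ** A) = Y ** A" using Y unfolding is_pinv_def by auto
  have "X = X ** (A ** X)" using a2 by (simp add: matrix_mul_assoc)
  also have "\<dots> = X ** transpose (A ** X)" using a3 by simp
  also have "\<dots> = X ** transpose X ** transpose A" by (simp add: matrix_transpose_mul matrix_mul_assoc)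
  also have "\<dots> = X ** transpose X ** transpose (A ** Y ** A)" using b1 by simp
  also have "\<dots> = X ** (transpose (A ** X) ** transpose (A ** Y))"
    by (simp add: matrix_transpose_mul matrix_mul_assoc)
  also have "\<dots> = X ** (A ** X ** (A ** Y))" using a3 b3 by simp
  also have "\<dots> = (X ** A ** X) ** A ** Y" by (simp add: matrix_mul_assoc)
  also have "\<dots> = X ** A ** Y" using a2 by simp
  finally have 1: "X = X ** A ** Y" .
  have "Y = (Y ** A) ** Y" using b2 by simp
  also have "\<dots> = transpose (Y ** A) ** Y" using b4 by simp
  also have "\<dots> = transpose A ** transpose Y ** Y" by (simp add: matrix_transpose_mul)
  also have "\<dots> = transpose (A ** X ** A) ** transpose Y ** Y" using a1 by simp
  also have "\<dots> = transpose (X ** A) ** transpose (Y ** A) ** Y"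
    by (simp add: matrix_transpose_mul matrix_mul_assoc)
  also have "\<dots> = X ** A ** (Y ** A ** Y)" using a4 b4 by (simp add: matrix_mul_assoc)
  also have "\<dots> = X ** A ** Y" using b2 by simp
  finally show ?thesis using 1 by simp
qed

lemma pinv_eq:
  assumes "is_pinv A X" shows "pinv A = X"
  unfolding pinv_def using assms pinv_unique by blast

lemma diag_mult: "diag_mat s *v v = (\<chi> i. s i * v $ i)"
proof -
  have "(\<Sum>j\<in>UNIV. (if i = j then s i else 0) * v$j) = (\<Sum>j\<in>UNIV. if i = j then s i * v$j else 0)" for i
    by (rule sum.cong) auto
  then show ?thesis unfolding diag_mat_def matrix_vector_mult_def by (simp add: vec_eq_iff)
qed

theorem corollaryS61:
  fixes W :: "((real,'N::{finite,linorder}) vec,'N) vec"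
    and U V :: "((real,'N) vec,'N) vec" and s :: "'N \<Rightarrow> real"
    and Vn :: "((real,'n::{finite,linorder}) vec,'N) vec"
    and g :: "(real,'N) vec \<Rightarrow> (real,'N) vec \<Rightarrow> (real,'N) vec"
    and a :: real
  assumes svd: "is_svd W U s V"
    and rk: "rank W = CARD('n)"
    and lt: "CARD('n) < CARD('N)"
    and Vn: "first_cols V Vn"
    and C1: "\<exists>D :: ((real,'N) vec \<times> (real,'N) vec) \<Rightarrow> (((real,'N) vec \<times> (real,'N) vec) \<Rightarrow>\<^sub>L (real,'N) vec).
               (\<forall>p. ((\<lambda>q. g (fst q) (snd q)) has_derivative blinfun_apply (D p)) (at p))
               \<and> continuous_on UNIV D"
    and Jx: "\<forall>x y. ((\<lambda>z. g z y) has_derivative (\<lambda>h. a *\<^sub>R h)) (at x)"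
  shows "\<forall>x :: (real,'N) vec.
    (1 / sqrt (real CARD('n))) *
      norm (transpose Vn *v g x (W *v x)
            - transpose Vn *v g (pinv (transpose Vn) *v (transpose Vn *v x))
                                (W *v (pinv (transpose Vn) *v (transpose Vn *v x)))) = 0"
proof
  fix x :: "(real,'N) vec"
  obtain idx :: "'n \<Rightarrow> 'N" where sm: "strict_mono idx"
    and seg: "\<And>i k. i \<le> idx k \<Longrightarrow> i \<in> range idx"
    and Vnd: "\<And>i k. Vn $ i $ k = V $ i $ idx k"
    using Vn unfolding first_cols_def by blast
  have inj: "inj idx" using sm by (rule strict_mono_imp_inj_on)
  have oU: "orthogonal_matrix U" and oV: "orthogonal_matrix V" and spos: "\<And>i. 0 \<le> s i"
    and smon: "\<And>i j. i \<le> j \<Longrightarrow> s j \<le> s i"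
    and Wd: "W = U ** diag_mat s ** transpose V"
    using svd unfolding is_svd_def by auto
  have VtV: "transpose V ** V = mat 1" and VVt: "V ** transpose V = mat 1"
    using oV unfolding orthogonal_matrix_def by auto
  have VtVe: "(\<Sum>j\<in>UNIV. V $ j $ i * V $ j $ i') = (if i = i' then 1 else 0)" for i i'
  proof -
    have "(transpose V ** V) $ i $ i' = (if i = i' then 1 else 0)" using VtV by (simp add: mat_def)
    thus ?thesis by (simp add: matrix_matrix_mult_def transpose_def)
  qed
  have MMt: "transpose Vn ** Vn = mat 1"
    by (simp add: vec_eq_iff matrix_matrix_mult_def transpose_def mat_def Vnd VtVe inj_eq[OF inj])
  have ip: "is_pinv (transpose Vn) Vn"
    unfolding is_pinv_def
    by (simp add: MMt matrix_mul_assoc[symmetric] matrix_transpose_mul)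
  have pv: "pinv (transpose Vn) = Vn" using ip by (rule pinv_eq)
  define x' where "x' = Vn *v (transpose Vn *v x)"
  have Mx': "transpose Vn *v x' = transpose Vn *v x"
    unfolding x'_def by (simp add: matrix_vector_mul_assoc MMt)
  have sz: "s j = 0" if j: "j \<notin> range idx" for j
  proof (rule ccontr)
    assume nz: "s j \<noteq> 0"
    define T where "T = {i. s i \<noteq> 0}"
    have lt2: "idx k < j" for k using seg[of j k] j by (metis not_le)
    have sub: "insert j (range idx) \<subseteq> T"
    proof
      fix i assume "i \<in> insert j (range idx)"
      then consider "i = j" | k where "i = idx k" by auto
      then show "i \<in> T"
      proof cases
        case 1 then show ?thesis using nz unfolding T_def by simp
      next
        case (2 k)
        have "s j \<le> s (idx k)" using smon[of "idx k" j] lt2[of k] by simp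
        moreover have "0 < s j" using spos[of j] nz by simp
        ultimately show ?thesis using 2 unfolding T_def by simp
      qed
    qed
    have cT: "card (insert j (range idx)) = CARD('n) + 1"
      using j inj by (simp add: card_image)
    define B where "B = (\<lambda>i. U *v axis i 1) ` T"
    have ot: "orthogonal_transformation ((*v) U)"
      using oU by (simp add: orthogonal_transformation_matrix matrix_vector_mul_linear)
    have dotU: "(U *v u) \<bullet> (U *v v) = u \<bullet> v" for u v
      using ot unfolding orthogonal_transformation_def by blast
    have UtU: "transpose U ** U = mat 1" using oU unfolding orthogonal_matrix_def by simp
    have injU: "inj ((*v) U)"
    proof (rule injI)
      fix u v assume "U *v u = U *v v"
      then have "transpose U *v (U *v u) = transpose U *v (U *v v)" by simp
      then show "u = v" by (simp add: matrix_vector_mul_assoc UtU)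
    qed
    have injB: "inj_on (\<lambda>i. U *v axis i 1) T"
    proof (rule inj_onI)
      fix i i' assume "U *v axis i (1::real) = U *v axis i' 1"
      then have "axis i (1::real) = axis i' 1" using injU by (simp add: inj_def)
      then show "i = i'" by (simp add: axis_eq_axis)
    qed
    have indB: "independent B"
    proof (rule pairwise_orthogonal_independent)
      show "pairwise orthogonal B"
      proof (unfold B_def pairwise_def, intro ballI impI)
        fix b1 b2 assume b1: "b1 \<in> (\<lambda>i. U *v axis i 1) ` T" and b2: "b2 \<in> (\<lambda>i. U *v axis i 1) ` T"
          and ne: "b1 \<noteq> b2"
        obtain i where i: "b1 = U *v axis i 1" using b1 by blast
        obtain i' where i': "b2 = U *v axis i' 1" using b2 by blast
        have "i \<noteq> i'" using ne i i' by blast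
        then show "orthogonal b1 b2" unfolding orthogonal_def i i' dotU
          by (simp add: inner_axis_axis)
      qed
      show "0 \<notin> B" unfolding B_def
      proof
        assume "0 \<in> (\<lambda>i. U *v axis i 1) ` T"
        then obtain i where "U *v axis i 1 = 0" by auto
        then have "(U *v axis i 1) \<bullet> (U *v axis i 1) = 0" by simp
        then show False by (simp add: dotU inner_axis_axis)
      qed
    qed
    have WVe: "W *v (V *v axis i 1) = s i *\<^sub>R (U *v axis i 1)" for i
    proof -
      have "W *v (V *v axis i 1) = U *v (diag_mat s *v ((transpose V ** V) *v axis i 1))"
        by (simp add: Wd matrix_vector_mul_assoc matrix_mul_assoc)
      also have "diag_mat s *v ((transpose V ** V) *v axis i 1) = s i *\<^sub>R axis i 1"
        by (simp add: VtV diag_mult vec_eq_iff axis_def)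
      finally show ?thesis by (simp add: matrix_vector_mult_scaleR)
    qed
    have Bsub: "B \<subseteq> range (\<lambda>x. W *v x)"
    proof
      fix b assume "b \<in> B"
      then obtain i where i: "i \<in> T" "b = U *v axis i 1" unfolding B_def by auto
      have "W *v (V *v (inverse (s i) *\<^sub>R axis i 1)) = b"
        using i WVe[of i] by (simp add: matrix_vector_mult_scaleR T_def)
      thus "b \<in> range (\<lambda>x. W *v x)" by (metis rangeI)
    qed
    have "card T = dim B"
      using indB injB dim_span_eq_card_independent[OF indB] dim_span[of B]
      unfolding B_def by (simp add: card_image)
    also have "\<dots> \<le> rank W" unfolding rank_dim_range using Bsub by (rule dim_subset)
    finally have "card T \<le> CARD('n)" using rk by simp
    moreover have "card (insert j (range idx)) \<le> card T"
      using sub by (rule card_mono[OF finite])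
    ultimately show False using cT by simp
  qed
  have Wx': "W *v x' = W *v x"
  proof -
    have key: "diag_mat s *v (transpose V *v x') = diag_mat s *v (transpose V *v x)"
    proof -
      have c: "s i * (transpose V *v x') $ i = s i * (transpose V *v x) $ i" for i
      proof (cases "i \<in> range idx")
        case False then show ?thesis using sz by simp
      next
        case True
        then obtain k where k: "i = idx k" by auto
        have E: "(transpose V ** Vn) $ i' $ k' = (if i' = idx k' then 1 else 0)" for i' k'
          using VtVe by (simp add: matrix_matrix_mult_def transpose_def Vnd)
        have "(transpose V *v x') $ i = ((transpose V ** Vn) *v (transpose Vn *v x)) $ i"
          by (simp add: x'_def matrix_vector_mul_assoc)
        also have "\<dots> = (transpose Vn *v x) $ k"
        proof -
          have "(\<Sum>k'\<in>UNIV. (transpose V ** Vn) $ i $ k' * (transpose Vn *v x) $ k')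
              = (\<Sum>k'\<in>UNIV. if k = k' then (transpose Vn *v x) $ k' else 0)"
            by (rule sum.cong) (auto simp: E k inj_eq[OF inj])
          then show ?thesis by (simp add: matrix_vector_mult_def)
        qed
        also have "\<dots> = (transpose V *v x) $ i"
          by (simp add: matrix_vector_mult_def transpose_def Vnd k)
        finally show ?thesis by simp
      qed
      show ?thesis using c by (simp add: diag_mult vec_eq_iff)
    qed
    show ?thesis unfolding Wd
      by (metis key matrix_vector_mul_assoc)
  qed
  have gd: "g z y = g 0 y + a *\<^sub>R z" for z y
  proof -
    have "\<exists>c. \<forall>z\<in>UNIV. g z y - a *\<^sub>R z = c"
    proof (rule has_derivative_zero_constant)
      fix z :: "(real,'N) vec"
      have "((\<lambda>z. g z y - a *\<^sub>R z) has_derivative (\<lambda>h. a *\<^sub>R h - a *\<^sub>R h)) (at z)"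
        using Jx by (intro has_derivative_diff has_derivative_scaleR_right has_derivative_ident) auto
      thus "((\<lambda>z. g z y - a *\<^sub>R z) has_derivative (\<lambda>h. 0)) (at z within UNIV)" by simp
    qed simp
    then obtain c where "\<And>z. g z y - a *\<^sub>R z = c" by blast
    from this[of z] this[of 0] show ?thesis by (simp add: algebra_simps)
  qed
  have "transpose Vn *v g x (W *v x) - transpose Vn *v g x' (W *v x')
        = a *\<^sub>R (transpose Vn *v x - transpose Vn *v x')"
    using Wx' gd[of x "W *v x"] gd[of x' "W *v x"]
    by (simp add: algebra_simps)
  also have "\<dots> = 0" using Mx' by simp
  finally show "(1 / sqrt (real CARD('n))) *
      norm (transpose Vn *v g x (W *v x)
            - transpose Vn *v g (pinv (transpose Vn) *v (transpose Vn *v x))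
                                (W *v (pinv (transpose Vn) *v (transpose Vn *v x)))) = 0"
    unfolding pv x'_def[symmetric] by simp
qed

end
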